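(* Let $n,p$ be positive integers, $X\in\mathbb{R}^{n\times p}$, $\mathbf y\in\mathbb{R}^n$, $\delta>0$ and $\lambda>0$. Then \[ \nabla f_\lambda(\mathbf t)=\boldsymbol\zeta_{\mathbf t}+\lambda\mathbf 1,\qquad \mathbf t\in(0,1)^p, \] and, for every $\mathbf w\in\mathbb{R}^p$, with $\mathbf t=\mathbf t(\mathbf w)$, \[ \nabla g_\lambda(\mathbf w)=(\boldsymbol\zeta_{\mathbf t}+\lambda\mathbf 1)\odot\big(2\mathbf w\odot\exp(-\mathbf w\odot\mathbf w)\big), \] where \[ \boldsymbol\zeta_{\mathbf t}=2\big(\widetilde{\boldsymbol\beta}_{\mathbf t}\odot(\mathbf a_{\mathbf t}-\mathbf d_{\mathbf t})\big)-2(\mathbf b_{\mathbf t}\odot\mathbf c_{\mathbf t}), \] with \begin{align*} \mathbf a_{\mathbf t}&=\left(\tfrac{X^\top X}{n}\right)(\mathbf t\odot\widetilde{\boldsymbol\beta}_{\mathbf t})-\tfrac{X^\top\mathbf y}{n},\qquad \mathbf b_{\mathbf t}=\mathbf a_{\mathbf t}-\tfrac{\delta}{n}(\mathbf t\odot\widetilde{\boldsymbol\beta}_{\mathbf t}),\\ \mathbf c_{\mathbf t}&=L_{\mathbf t}^{-1}(\mathbf t\odot\mathbf a_{\mathbf t}),\qquad \mathbf d_{\mathbf t}=\left(\tfrac{X^\top X}{n}-\tfrac{\delta}{n}I\right)(\mathbf t\odot\mathbf c_{\mathbf t}). \end{align*}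
   Context: For $\mathbf t\in[0,1]^p$, $T_{\mathbf t}=\mathrm{Diag}(t_1,\dots,t_p)$, $X_{\mathbf t}=XT_{\mathbf t}$, $L_{\mathbf t}=\frac1n[X_{\mathbf t}^\top X_{\mathbf t}+\delta(I-T_{\mathbf t}^2)]$ with $I$ the $p\times p$ identity, $\widetilde{\boldsymbol\beta}_{\mathbf t}:=L_{\mathbf t}^{+}\left(X_{\mathbf t}^\top\mathbf y/n\right)$ with $L_{\mathbf t}^+$ the Moore–Penrose pseudo-inverse, $f_\lambda(\mathbf t)=\frac1n\|\mathbf y-X_{\mathbf t}\widetilde{\boldsymbol\beta}_{\mathbf t}\|_2^2+\lambda\sum_{j=1}^p t_j$, $\mathbf t(\mathbf w)$ is defined by $t_j(w_j)=1-\exp(-w_j^2)$, and $g_\lambda(\mathbf w)=f_\lambda(\mathbf t(\mathbf w))$. Here $\odot$ is the element-wise product, $\exp$ is applied element-wise, and $\mathbf 1$ is the all-ones vector in $\mathbb{R}^p$. *)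

theory Defs
  imports "HOL-Analysis.Analysis"
begin

text \<open>Vectors in R^p are real^'p, the data matrix X in R^(n x p) is real^'p^'n,
  so n = CARD('n) and p = CARD('p).\<close>

definition had :: "real^'p \<Rightarrow> real^'p \<Rightarrow> real^'p" where
  "had x z = (\<chi> i. x$i * z$i)"

definition pinv :: "real^'p^'p \<Rightarrow> real^'p^'p" where
  "pinv A = (THE B. A ** B ** A = A \<and> B ** A ** B = B \<and>
                    transpose (A ** B) = A ** B \<and> transpose (B ** A) = B ** A)"

definition Tm :: "real^'p \<Rightarrow> real^'p^'p" where
  "Tm t = (\<chi> i j. if i = j then t$i else 0)"

definition Xt :: "real^'p^'n \<Rightarrow> real^'p \<Rightarrow> real^'p^'n" where
  "Xt X t = X ** Tm t"

definition Lt :: "real^'p^'n \<Rightarrow> real \<Rightarrow> real^'p \<Rightarrow> real^'p^'p" where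
  "Lt X \<delta> t = (1 / real CARD('n)) *\<^sub>R
     (transpose (Xt X t) ** Xt X t + \<delta> *\<^sub>R (mat 1 - Tm t ** Tm t))"

definition betat :: "real^'p^'n \<Rightarrow> real^'n \<Rightarrow> real \<Rightarrow> real^'p \<Rightarrow> real^'p" where
  "betat X y \<delta> t = pinv (Lt X \<delta> t) *v ((1 / real CARD('n)) *\<^sub>R (transpose (Xt X t) *v y))"

definition flam :: "real^'p^'n \<Rightarrow> real^'n \<Rightarrow> real \<Rightarrow> real \<Rightarrow> real^'p \<Rightarrow> real" where
  "flam X y \<delta> lam t = (1 / real CARD('n)) * (norm (y - Xt X t *v betat X y \<delta> t))\<^sup>2
     + lam * (\<Sum>j\<in>UNIV. t$j)"

definition tw :: "real^'p \<Rightarrow> real^'p" where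
  "tw w = (\<chi> j. 1 - exp (- (w$j)\<^sup>2))"

definition glam :: "real^'p^'n \<Rightarrow> real^'n \<Rightarrow> real \<Rightarrow> real \<Rightarrow> real^'p \<Rightarrow> real" where
  "glam X y \<delta> lam w = flam X y \<delta> lam (tw w)"

definition avec :: "real^'p^'n \<Rightarrow> real^'n \<Rightarrow> real \<Rightarrow> real^'p \<Rightarrow> real^'p" where
  "avec X y \<delta> t = ((1 / real CARD('n)) *\<^sub>R (transpose X ** X)) *v had t (betat X y \<delta> t)
      - (1 / real CARD('n)) *\<^sub>R (transpose X *v y)"

definition bvec :: "real^'p^'n \<Rightarrow> real^'n \<Rightarrow> real \<Rightarrow> real^'p \<Rightarrow> real^'p" where
  "bvec X y \<delta> t = avec X y \<delta> t - (\<delta> / real CARD('n)) *\<^sub>R had t (betat X y \<delta> t)"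

definition cvec :: "real^'p^'n \<Rightarrow> real^'n \<Rightarrow> real \<Rightarrow> real^'p \<Rightarrow> real^'p" where
  "cvec X y \<delta> t = matrix_inv (Lt X \<delta> t) *v had t (avec X y \<delta> t)"

definition dvec :: "real^'p^'n \<Rightarrow> real^'n \<Rightarrow> real \<Rightarrow> real^'p \<Rightarrow> real^'p" where
  "dvec X y \<delta> t = ((1 / real CARD('n)) *\<^sub>R (transpose X ** X) - (\<delta> / real CARD('n)) *\<^sub>R mat 1)
      *v had t (cvec X y \<delta> t)"

definition zeta :: "real^'p^'n \<Rightarrow> real^'n \<Rightarrow> real \<Rightarrow> real^'p \<Rightarrow> real^'p" where
  "zeta X y \<delta> t = 2 *\<^sub>R had (betat X y \<delta> t) (avec X y \<delta> t - dvec X y \<delta> t)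
      - 2 *\<^sub>R had (bvec X y \<delta> t) (cvec X y \<delta> t)"

end

theory Submission
  imports Defs
begin


lemma Tm_mv: "Tm s *v v = had s v"
proof -
  have "\<And>i. (\<Sum>j\<in>UNIV. (if i = j then s$i else 0) * v$j) = s$i * v$i"
    by (simp add: if_distrib[of "\<lambda>x. x * _"] cong: if_cong)
  then show ?thesis by (simp add: Tm_def had_def matrix_vector_mult_def vec_eq_iff)
qed

lemma transpose_Tm: "transpose (Tm s) = Tm s"
  by (simp add: Tm_def transpose_def vec_eq_iff)

lemma Xt_mv: "Xt X s *v v = X *v had s v"
  by (simp add: Xt_def matrix_vector_mul_assoc[symmetric] Tm_mv)

lemma Xt_T_mv: "transpose (Xt X s) *v z = had s (transpose X *v z)"
  by (simp add: Xt_def matrix_transpose_mul transpose_Tm matrix_vector_mul_assoc[symmetric] Tm_mv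
     del: transpose_matrix_vector)

lemma Lt_mv: "Lt X \<delta> s *v v = (1 / real CARD('n)) *\<^sub>R
   (had s ((transpose X ** X) *v had s v) + \<delta> *\<^sub>R (v - had s (had s v)))"
  for X :: "real^'p^'n"
  by (simp add: Lt_def scaleR_matrix_vector_assoc[symmetric] matrix_vector_mult_add_rdistrib
      matrix_vector_mult_diff_rdistrib matrix_vector_mul_assoc[symmetric] Xt_mv Xt_T_mv Tm_mv
     del: transpose_matrix_vector)



lemma matrix_inv_props:
  fixes A :: "real^'p^'p"
  assumes "invertible A"
  shows "A ** matrix_inv A = mat 1" "matrix_inv A ** A = mat 1"
proof -
  have "\<exists>A'. A ** A' = mat 1 \<and> A' ** A = mat 1" using assms by (simp add: invertible_def)
  then have "A ** matrix_inv A = mat 1 \<and> matrix_inv A ** A = mat 1"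
    unfolding matrix_inv_def by (rule someI_ex)
  then show "A ** matrix_inv A = mat 1" "matrix_inv A ** A = mat 1" by auto
qed

lemma pinv_inv:
  fixes A :: "real^'p^'p"
  assumes "invertible A"
  shows "pinv A = matrix_inv A"
  unfolding pinv_def
proof (rule the_equality)
  note I = matrix_inv_props[OF assms]
  show "A ** matrix_inv A ** A = A \<and> matrix_inv A ** A ** matrix_inv A = matrix_inv A \<and>
    transpose (A ** matrix_inv A) = A ** matrix_inv A \<and> transpose (matrix_inv A ** A) = matrix_inv A ** A"
    by (simp add: I transpose_mat)
  fix B assume "A ** B ** A = A \<and> B ** A ** B = B \<and> transpose (A ** B) = A ** B \<and> transpose (B ** A) = B ** A"
  then have h: "A ** B ** A = A" by blast
  have "B = matrix_inv A ** (A ** B ** A) ** matrix_inv A"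
    by (simp add: matrix_mul_assoc[symmetric] I) (simp add: matrix_mul_assoc I)
  then show "B = matrix_inv A" by (simp add: h matrix_mul_assoc I)
qed

lemma transpose_matrix_inv:
  fixes A :: "real^'p^'p"
  assumes "invertible A" "transpose A = A"
  shows "transpose (matrix_inv A) = matrix_inv A"
proof -
  note I = matrix_inv_props[OF assms(1)]
  have "transpose (matrix_inv A) ** A = mat 1"
    by (metis I(1) assms(2) matrix_transpose_mul transpose_mat)
  have "transpose (matrix_inv A) = transpose (matrix_inv A) ** (A ** matrix_inv A)"
    by (simp add: I)
  also have "\<dots> = matrix_inv A"
    by (simp add: matrix_mul_assoc \<open>transpose (matrix_inv A) ** A = mat 1\<close>)
  finally show ?thesis .
qed

lemma inner_vec_sum: "(x::real^'p) \<bullet> y = (\<Sum>j\<in>UNIV. x$j * y$j)"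
  by (simp add: inner_vec_def)

lemma had_inner: "had x y \<bullet> z = x \<bullet> had y z"
  by (simp add: inner_vec_sum had_def mult.assoc)

lemma had_comm: "had x y = had y x"
  by (simp add: had_def vec_eq_iff mult.commute)

lemma had_assoc: "had (had x y) z = had x (had y z)"
  by (simp add: had_def vec_eq_iff mult.assoc)

lemma inner_had_swap: "x \<bullet> had s w = had s x \<bullet> w"
  by (simp add: inner_vec_sum had_def mult_ac)

lemma norm_sq_sum: "(norm (v::real^'p))\<^sup>2 = (\<Sum>j\<in>UNIV. (v$j)\<^sup>2)"
  unfolding power2_norm_eq_inner by (simp add: inner_vec_sum power2_eq_square)

lemma transpose_mv_inner: "(transpose A *v z) \<bullet> w = z \<bullet> (A *v w)" for A :: "real^'p^'n"
  by (simp add: dot_lmul_matrix)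

lemma transpose_add': "transpose (A + B) = transpose A + transpose B"
  by (simp add: transpose_def vec_eq_iff)

lemma transpose_diff': "transpose (A - B) = transpose A - transpose B"
  by (simp add: transpose_def vec_eq_iff)

lemma Lt_sym: "transpose (Lt X \<delta> s) = Lt X \<delta> s"
  by (simp add: Lt_def transpose_scalar transpose_add' transpose_diff' matrix_transpose_mul transpose_Tm)

lemma Lt_quad: "v \<bullet> (Lt X \<delta> s *v v) = (1 / real CARD('n)) *
   ((norm (X *v had s v))\<^sup>2 + \<delta> * (\<Sum>j\<in>UNIV. (1 - (s$j)\<^sup>2) * (v$j)\<^sup>2))"
  for X :: "real^'p^'n"
proof -
  have 1: "v \<bullet> had s ((transpose X ** X) *v had s v) = (norm (X *v had s v))\<^sup>2"
  proof -
    have "v \<bullet> had s ((transpose X ** X) *v had s v) = had s v \<bullet> (transpose X *v (X *v had s v))"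
      by (simp add: inner_had_swap matrix_vector_mul_assoc[symmetric] del: transpose_matrix_vector)
    also have "\<dots> = (X *v had s v) \<bullet> (X *v had s v)"
      by (simp add: inner_commute[of "had s v"] transpose_mv_inner del: transpose_matrix_vector)
    finally show ?thesis by (simp add: power2_norm_eq_inner)
  qed
  have 2: "v \<bullet> (v - had s (had s v)) = (\<Sum>j\<in>UNIV. (1 - (s$j)\<^sup>2) * (v$j)\<^sup>2)"
    by (simp add: inner_vec_sum had_def power2_eq_square algebra_simps sum_subtractf)
  show ?thesis by (simp add: Lt_mv inner_add_right 1 2)
qed

lemma Lt_lower:
  fixes X :: "real^'p^'n"
  assumes "\<delta> > 0" "\<mu> > 0" "\<forall>j. \<mu> \<le> 1 - (s$j)\<^sup>2"
  shows "(\<delta> * \<mu> / real CARD('n)) * norm v \<le> norm (Lt X \<delta> s *v v)"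
proof -
  have "\<mu> * (norm v)\<^sup>2 = (\<Sum>j\<in>UNIV. \<mu> * (v$j)\<^sup>2)"
    by (simp add: norm_sq_sum sum_distrib_left)
  also have "\<dots> \<le> (\<Sum>j\<in>UNIV. (1 - (s$j)\<^sup>2) * (v$j)\<^sup>2)"
    by (intro sum_mono mult_right_mono) (auto simp: assms)
  finally have a: "\<mu> * (norm v)\<^sup>2 \<le> (\<Sum>j\<in>UNIV. (1 - (s$j)\<^sup>2) * (v$j)\<^sup>2)" .
  have "(\<delta> * \<mu> / real CARD('n)) * (norm v)\<^sup>2 \<le> v \<bullet> (Lt X \<delta> s *v v)"
    unfolding Lt_quad using a assms(1)
    by (simp add: divide_simps) (smt (verit) mult_left_mono zero_le_power2 mult.assoc)
  also have "\<dots> \<le> norm v * norm (Lt X \<delta> s *v v)"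
    by (rule norm_cauchy_schwarz)
  finally have b: "(\<delta> * \<mu> / real CARD('n)) * (norm v)\<^sup>2 \<le> norm v * norm (Lt X \<delta> s *v v)" .
  show ?thesis
  proof (cases "v = 0")
    case True then show ?thesis by simp
  next
    case False
    then have "norm v > 0" by simp
    have "norm v * ((\<delta> * \<mu> / real CARD('n)) * norm v) \<le> norm v * norm (Lt X \<delta> s *v v)"
      using b by (simp add: power2_eq_square mult_ac)
    with \<open>norm v > 0\<close> show ?thesis by (rule mult_left_le_imp_le[rotated]) 
  qed
qed

lemma Lt_invertible:
  fixes X :: "real^'p^'n"
  assumes "\<delta> > 0" "\<mu> > 0" "\<forall>j. \<mu> \<le> 1 - (s$j)\<^sup>2"
  shows "invertible (Lt X \<delta> s)"
proof -
  have "inj ((*v) (Lt X \<delta> s))"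
  proof (rule injI)
    fix u v assume "Lt X \<delta> s *v u = Lt X \<delta> s *v v"
    then have "Lt X \<delta> s *v (u - v) = 0" by (simp add: matrix_vector_mult_diff_distrib)
    moreover have "(\<delta> * \<mu> / real CARD('n)) * norm (u - v) \<le> norm (Lt X \<delta> s *v (u - v))"
      by (rule Lt_lower[OF assms])
    moreover have "\<delta> * \<mu> / real CARD('n) > 0" using assms by simp
    ultimately have "norm (u - v) \<le> 0"
      by (metis mult_le_0_iff norm_zero linorder_not_le norm_ge_zero)
    then show "u = v" by simp
  qed
  then show ?thesis
    using invertible_left_inverse matrix_left_invertible_injective by blast
qed



lemma bb_mv: "bounded_bilinear (\<lambda>(A::real^'a^'b) (v::real^'a). A *v v)"
proof -
  have "bilinear (\<lambda>(A::real^'a^'b) (v::real^'a). A *v v)"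
    unfolding bilinear_def
    by (auto intro!: linearI simp: matrix_vector_mult_add_rdistrib matrix_vector_right_distrib
        matrix_vector_mult_scaleR scaleR_matrix_vector_assoc)
  then show ?thesis by (simp add: bilinear_conv_bounded_bilinear)
qed

lemma bl_mv: "bounded_linear (\<lambda>v. (A::real^'a^'b) *v v)"
  using bounded_bilinear.bounded_linear_right[OF bb_mv] .

lemma implicit_deriv:
  fixes M :: "'a::real_normed_vector \<Rightarrow> real^'p^'p" and \<beta> r :: "'a \<Rightarrow> real^'p"
  assumes Md: "(M has_derivative M') (at t)"
    and qd: "((\<lambda>s. r s - M s *v \<beta> t) has_derivative q') (at t)"
    and \<kappa>: "\<kappa> > 0" and low: "\<forall>\<^sub>F s in at t. \<forall>v. \<kappa> * norm v \<le> norm (M s *v v)"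
    and eq: "\<forall>\<^sub>F s in at t. M s *v \<beta> s = r s" and eqt: "M t *v \<beta> t = r t"
    and inv: "invertible (M t)"
  shows "(\<beta> has_derivative (\<lambda>h. matrix_inv (M t) *v q' h)) (at t)"
proof -
  define B where "B = (\<lambda>h. matrix_inv (M t) *v q' h)"
  have blq: "bounded_linear q'" using qd by (rule has_derivative_bounded_linear)
  have blB: "bounded_linear B" unfolding B_def
    using bounded_linear_compose[OF bl_mv[of "matrix_inv (M t)"] blq] by (simp add: o_def)
  have MB: "M t *v B h = q' h" for h
    by (simp add: B_def matrix_vector_mul_assoc matrix_inv_props[OF inv])
  define \<psi> where "\<psi> = (\<lambda>s. r s - M s *v \<beta> t - (M s - M t) *v B (s - t))"
  have d1: "((\<lambda>s. M s - M t) has_derivative M') (at t)"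
    using has_derivative_diff[OF Md has_derivative_const[of "M t"]] by simp
  have d2: "((\<lambda>s. B (s - t)) has_derivative B) (at t)"
    using bounded_linear.has_derivative[OF blB has_derivative_diff[OF has_derivative_ident has_derivative_const[of t]]]
    by simp
  have d3: "((\<lambda>s. (M s - M t) *v B (s - t)) has_derivative (\<lambda>h. 0)) (at t)"
    using bounded_bilinear.FDERIV[OF bb_mv d1 d2]
    by (simp add: linear_0[OF bounded_linear.linear[OF blB]])
  have d\<psi>: "(\<psi> has_derivative q') (at t)"
    unfolding \<psi>_def using has_derivative_diff[OF qd d3] by simp
  have \<psi>t: "\<psi> t = 0" by (simp add: \<psi>_def eqt linear_0[OF bounded_linear.linear[OF blB]])
  have lim: "((\<lambda>y. norm (\<psi> y - \<psi> t - q' (y - t)) / norm (y - t)) \<longlongrightarrow> 0) (at t)"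
    using d\<psi> by (simp add: has_derivative_iff_norm)
  have "((\<lambda>y. norm (\<beta> y - \<beta> t - B (y - t)) / norm (y - t)) \<longlongrightarrow> 0) (at t)"
  proof (rule tendsto_0_le[OF lim, where K="1/\<kappa>"])
    show "\<forall>\<^sub>F y in at t. norm (norm (\<beta> y - \<beta> t - B (y - t)) / norm (y - t))
        \<le> norm (norm (\<psi> y - \<psi> t - q' (y - t)) / norm (y - t)) * (1 / \<kappa>)"
      using eq low
    proof eventually_elim
      case (elim y)
      have "M y *v (\<beta> y - \<beta> t - B (y - t)) = \<psi> y - \<psi> t - q' (y - t)"
        by (simp add: \<psi>t \<psi>_def elim(1) eqt matrix_vector_mult_diff_distrib
            matrix_vector_mult_diff_rdistrib MB[symmetric])
      then have "\<kappa> * norm (\<beta> y - \<beta> t - B (y - t)) \<le> norm (\<psi> y - \<psi> t - q' (y - t))"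
        using elim(2) by metis
      then have "norm (\<beta> y - \<beta> t - B (y - t)) \<le> norm (\<psi> y - \<psi> t - q' (y - t)) * (1 / \<kappa>)"
        using \<kappa> by (simp add: field_simps)
      then have "norm (\<beta> y - \<beta> t - B (y - t)) / norm (y - t) \<le> (norm (\<psi> y - \<psi> t - q' (y - t)) * (1 / \<kappa>)) / norm (y - t)"
        by (rule divide_right_mono) simp
      then show ?case by (simp add: field_simps)
    qed
  qed
  then show ?thesis unfolding B_def[symmetric] using blB by (simp add: has_derivative_iff_norm)
qed



lemma bb_had: "bounded_bilinear had"
proof -
  have "bilinear had"
    unfolding bilinear_def
    by (auto intro!: linearI simp: had_def vec_eq_iff algebra_simps)
  then show ?thesis by (simp add: bilinear_conv_bounded_bilinear)
qed

lemma bb_mm: "bounded_bilinear (\<lambda>(A::real^'a^'b) (B::real^'c^'a). A ** B)"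
proof -
  have "bilinear (\<lambda>(A::real^'a^'b) (B::real^'c^'a). A ** B)"
    unfolding bilinear_def
    by (auto intro!: linearI simp: matrix_matrix_mult_def vec_eq_iff sum.distrib algebra_simps scaleR_sum_right sum_distrib_left)
  then show ?thesis by (simp add: bilinear_conv_bounded_bilinear)
qed

lemma bl_Tm: "bounded_linear (Tm :: real^'p \<Rightarrow> real^'p^'p)"
proof -
  have "linear (Tm :: real^'p \<Rightarrow> real^'p^'p)"
    by (auto intro!: linearI simp: Tm_def vec_eq_iff)
  then show ?thesis by (simp add: linear_conv_bounded_linear)
qed

lemma Lt_eq: "Lt X \<delta> s = (1 / real CARD('n)) *\<^sub>R (Tm s ** (transpose X ** X) ** Tm s + \<delta> *\<^sub>R (mat 1 - Tm s ** Tm s))"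
  for X :: "real^'p^'n"
  by (simp add: Lt_def Xt_def matrix_transpose_mul transpose_Tm matrix_mul_assoc)

lemma Lt_deriv: "\<exists>D. (Lt X \<delta> has_derivative D) (at t)"
  for X :: "real^'p^'n"
proof -
  have dTm: "(Tm has_derivative Tm) (at t)"
    by (rule bounded_linear.has_derivative[OF bl_Tm has_derivative_ident])
  have "\<exists>D. ((\<lambda>s. Tm s ** (transpose X ** X) ** Tm s) has_derivative D) (at t)"
    using bounded_bilinear.FDERIV[OF bb_mm bounded_bilinear.FDERIV[OF bb_mm dTm has_derivative_const[of "transpose X ** X"]] dTm]
    by blast
  then obtain D1 where D1: "((\<lambda>s. Tm s ** (transpose X ** X) ** Tm s) has_derivative D1) (at t)" by blast
  have "\<exists>D. ((\<lambda>s. Tm s ** Tm s) has_derivative D) (at t)"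
    using bounded_bilinear.FDERIV[OF bb_mm dTm dTm] by blast
  then obtain D2 where D2: "((\<lambda>s. Tm s ** Tm s) has_derivative D2) (at t)" by blast
  have e: "Lt X \<delta> = (\<lambda>s. (1 / real CARD('n)) *\<^sub>R (Tm s ** (transpose X ** X) ** Tm s + \<delta> *\<^sub>R (mat 1 - Tm s ** Tm s)))"
    by (simp add: fun_eq_iff Lt_eq)
  show ?thesis unfolding e
    by (rule exI, rule has_derivative_scaleR_right, rule has_derivative_add[OF D1 has_derivative_scaleR_right[OF has_derivative_diff[OF has_derivative_const D2]]])
qed



definition qd :: "real^'p^'n \<Rightarrow> real^'n \<Rightarrow> real \<Rightarrow> real^'p \<Rightarrow> real^'p \<Rightarrow> real^'p" where
  "qd X y \<delta> t h = (1 / real CARD('n)) *\<^sub>R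
     (had h (transpose X *v y) - (had h ((transpose X ** X) *v had t (betat X y \<delta> t))
       + had t ((transpose X ** X) *v had h (betat X y \<delta> t)))
      + \<delta> *\<^sub>R (had h (had t (betat X y \<delta> t)) + had t (had h (betat X y \<delta> t))))"

lemma had_derivs:
  "((\<lambda>s. had s v) has_derivative (\<lambda>h. had h v)) F"
  "((\<lambda>s. had s (A *v had s v)) has_derivative (\<lambda>h. had h (A *v had x v) + had x (A *v had h v))) (at x)"
proof -
  show 1: "((\<lambda>s. had s v) has_derivative (\<lambda>h. had h v)) F" for F v
    by (rule bounded_linear.has_derivative[OF bounded_bilinear.bounded_linear_left[OF bb_had] has_derivative_ident])
  have 2: "((\<lambda>s. A *v had s v) has_derivative (\<lambda>h. A *v had h v)) F" for F
    by (rule bounded_linear.has_derivative[OF bl_mv 1])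
  show "((\<lambda>s. had s (A *v had s v)) has_derivative (\<lambda>h. had h (A *v had x v) + had x (A *v had h v))) (at x)"
    by (rule has_derivative_eq_rhs[OF bounded_bilinear.FDERIV[OF bb_had has_derivative_ident 2, of x UNIV]])
      (simp add: fun_eq_iff add.commute)
qed

lemma q_deriv:
  fixes X :: "real^'p^'n"
  shows "((\<lambda>s. (1 / real CARD('n)) *\<^sub>R (transpose (Xt X s) *v y) - Lt X \<delta> s *v betat X y \<delta> t)
     has_derivative qd X y \<delta> t) (at t)"
proof -
  let ?b = "betat X y \<delta> t"
  have e: "(\<lambda>s. (1 / real CARD('n)) *\<^sub>R (transpose (Xt X s) *v y) - Lt X \<delta> s *v ?b) =
    (\<lambda>s. (1 / real CARD('n)) *\<^sub>R (had s (transpose X *v y) - had s ((transpose X ** X) *v had s ?b)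
      - \<delta> *\<^sub>R (?b - had s (had s ?b))))"
    by (simp add: fun_eq_iff Lt_mv Xt_T_mv algebra_simps del: transpose_matrix_vector)
  have hh: "((\<lambda>s. had s (had s ?b)) has_derivative (\<lambda>h. had h (had t ?b) + had t (had h ?b))) (at t)"
    using had_derivs(2)[of "mat 1" ?b t] by simp
  show ?thesis unfolding e
    apply (rule has_derivative_eq_rhs)
     apply (rule has_derivative_scaleR_right has_derivative_diff had_derivs has_derivative_const
         has_derivative_scaleR_right hh)+
    apply (simp add: fun_eq_iff qd_def algebra_simps del: transpose_matrix_vector)
    done
qed



lemma Lt_solve:
  fixes X :: "real^'p^'n"
  assumes "invertible (Lt X \<delta> s)"
  shows "Lt X \<delta> s *v betat X y \<delta> s = (1 / real CARD('n)) *\<^sub>R (transpose (Xt X s) *v y)"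
  by (simp add: betat_def pinv_inv[OF assms] matrix_vector_mul_assoc matrix_inv_props[OF assms]
      del: transpose_matrix_vector)

lemma beta_deriv:
  fixes X :: "real^'p^'n"
  assumes dpos: "\<delta> > 0" and tb: "\<forall>j. (t$j)\<^sup>2 < 1"
  shows "(betat X y \<delta> has_derivative (\<lambda>h. matrix_inv (Lt X \<delta> t) *v qd X y \<delta> t h)) (at t)"
proof -
  define \<mu> where "\<mu> = Min (range (\<lambda>j. 1 - (t$j)\<^sup>2)) / 2"
  have mpos: "Min (range (\<lambda>j. 1 - (t$j)\<^sup>2)) > 0" using tb by simp
  then have \<mu>pos: "\<mu> > 0" by (simp add: \<mu>_def)
  have \<mu>lt: "\<mu> < 1 - (t$j)\<^sup>2" for j
  proof -
    have "Min (range (\<lambda>j. 1 - (t$j)\<^sup>2)) \<le> 1 - (t$j)\<^sup>2" by simp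
    then show ?thesis using mpos unfolding \<mu>_def by linarith
  qed
  have ev: "\<forall>\<^sub>F s in at t. \<forall>j. \<mu> \<le> 1 - (s$j)\<^sup>2"
  proof (rule eventually_all_finite)
    fix j
    have "((\<lambda>s. 1 - (s$j)\<^sup>2) \<longlongrightarrow> 1 - (t$j)\<^sup>2) (at t)"
      by (intro tendsto_intros)
    from order_tendstoD(1)[OF this \<mu>lt[of j]]
    show "\<forall>\<^sub>F s in at t. \<mu> \<le> 1 - (s$j)\<^sup>2" by (rule eventually_mono) simp
  qed
  define \<kappa> where "\<kappa> = \<delta> * \<mu> / real CARD('n)"
  have \<kappa>pos: "\<kappa> > 0" using dpos \<mu>pos by (simp add: \<kappa>_def)
  have low: "\<forall>\<^sub>F s in at t. \<forall>v. \<kappa> * norm v \<le> norm (Lt X \<delta> s *v v)"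
    using ev by eventually_elim (use Lt_lower[OF dpos \<mu>pos] in \<open>auto simp: \<kappa>_def\<close>)
  have eq: "\<forall>\<^sub>F s in at t. Lt X \<delta> s *v betat X y \<delta> s = (1 / real CARD('n)) *\<^sub>R (transpose (Xt X s) *v y)"
    using ev by eventually_elim (rule Lt_solve, rule Lt_invertible[OF dpos \<mu>pos])
  have invt: "invertible (Lt X \<delta> t)"
    using Lt_invertible[OF dpos \<mu>pos] \<mu>lt less_imp_le by blast
  have eqt: "Lt X \<delta> t *v betat X y \<delta> t = (1 / real CARD('n)) *\<^sub>R (transpose (Xt X t) *v y)"
    by (rule Lt_solve[OF invt])
  obtain D where D: "(Lt X \<delta> has_derivative D) (at t)" using Lt_deriv by blast
  show ?thesis
    by (rule implicit_deriv[OF D q_deriv \<kappa>pos low eq eqt invt])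
qed



lemma G_sym_inner: "((transpose X ** X) *v u) \<bullet> v = u \<bullet> ((transpose X ** X) *v v)"
  for X :: "real^'p^'n"
proof -
  have "((transpose X ** X) *v u) \<bullet> v = (X *v u) \<bullet> (X *v v)"
    by (simp add: matrix_vector_mul_assoc[symmetric] transpose_mv_inner del: transpose_matrix_vector)
  moreover have "((transpose X ** X) *v v) \<bullet> u = (X *v v) \<bullet> (X *v u)"
    by (simp add: matrix_vector_mul_assoc[symmetric] transpose_mv_inner del: transpose_matrix_vector)
  ultimately show ?thesis by (simp add: inner_commute)
qed

lemma two_vec: "2 * (v::real^'p) = 2 *\<^sub>R v"
  by (simp add: vec_eq_iff)

lemma alg:
  fixes X :: "real^'p^'n"
  assumes inv: "invertible (Lt X \<delta> t)"
  shows "(1 / real CARD('n)) * (2 * ((y - X *v had t (betat X y \<delta> t)) \<bullet>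
      (- (X *v (had h (betat X y \<delta> t) + had t (matrix_inv (Lt X \<delta> t) *v qd X y \<delta> t h))))))
    = zeta X y \<delta> t \<bullet> h"
proof -
  define N where "N = real CARD('n)"
  have Npos: "N > 0" by (simp add: N_def)
  define \<beta> where "\<beta> = betat X y \<delta> t"
  define Li where "Li = matrix_inv (Lt X \<delta> t)"
  define G where "G = transpose X ** X"
  define Xy where "Xy = transpose X *v y"
  define a where "a = avec X y \<delta> t"
  define c where "c = cvec X y \<delta> t"
  define Gtc where "Gtc = G *v had t c"
  have a_eq: "N *\<^sub>R a = G *v had t \<beta> - Xy"
    using Npos by (simp add: a_def avec_def N_def G_def Xy_def \<beta>_def scaleR_matrix_vector_assoc[symmetric]
        algebra_simps del: transpose_matrix_vector)
  have c_eq: "c = Li *v had t a" by (simp add: c_def cvec_def Li_def a_def)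
  have s1: "transpose X *v (y - X *v had t \<beta>) = - (N *\<^sub>R a)"
    by (simp add: a_eq Xy_def G_def matrix_vector_mult_diff_distrib matrix_vector_mul_assoc
        del: transpose_matrix_vector)
  have s2: "(y - X *v had t \<beta>) \<bullet> (X *v z) = - (N * (a \<bullet> z))" for z
    using s1 transpose_mv_inner[of X "y - X *v had t \<beta>" z]
    by (simp del: transpose_matrix_vector)
  have Lisym: "transpose Li = Li"
    unfolding Li_def by (rule transpose_matrix_inv[OF inv Lt_sym])
  have s3: "a \<bullet> had t (Li *v q) = c \<bullet> q" for q
  proof -
    have "a \<bullet> had t (Li *v q) = had t a \<bullet> (Li *v q)" by (simp add: inner_had_swap)
    also have "\<dots> = (transpose Li *v had t a) \<bullet> q" by (simp add: transpose_mv_inner del: transpose_matrix_vector)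
    finally show ?thesis by (simp add: Lisym c_eq)
  qed
  have s4: "c \<bullet> qd X y \<delta> t h = - (c \<bullet> had h a) - (1 / N) * (Gtc \<bullet> had h \<beta>)
      + (2 * \<delta> / N) * (c \<bullet> had t (had h \<beta>))"
  proof -
    have 1: "had h Xy - had h (G *v had t \<beta>) = - N *\<^sub>R had h a"
    proof -
      have e1: "had h Xy - had h (G *v had t \<beta>) = had h (Xy - G *v had t \<beta>)"
        by (simp add: had_def vec_eq_iff algebra_simps)
      have e2: "Xy - G *v had t \<beta> = - (N *\<^sub>R a)" by (metis a_eq minus_diff_eq)
      show ?thesis unfolding e1 e2 by (simp add: had_def vec_eq_iff)
    qed
    have 2: "c \<bullet> had t (G *v had h \<beta>) = Gtc \<bullet> had h \<beta>"
    proof -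
      have "c \<bullet> had t (G *v had h \<beta>) = had t c \<bullet> (G *v had h \<beta>)" by (rule inner_had_swap)
      also have "\<dots> = (G *v had t c) \<bullet> had h \<beta>" unfolding G_def by (rule G_sym_inner[symmetric])
      finally show ?thesis by (simp add: Gtc_def)
    qed
    have 3: "had h (had t \<beta>) = had t (had h \<beta>)"
      by (simp add: had_def vec_eq_iff mult_ac)
    have "qd X y \<delta> t h = (1 / N) *\<^sub>R ((had h Xy - had h (G *v had t \<beta>)) - had t (G *v had h \<beta>)
        + (2 * \<delta>) *\<^sub>R had t (had h \<beta>))"
      by (simp add: qd_def N_def G_def Xy_def \<beta>_def 3[unfolded \<beta>_def] algebra_simps two_vec
          del: transpose_matrix_vector)
    also have "\<dots> = (1 / N) *\<^sub>R (- N *\<^sub>R had h a - had t (G *v had h \<beta>) + (2 * \<delta>) *\<^sub>R had t (had h \<beta>))"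
      by (simp only: 1)
    finally have qe: "qd X y \<delta> t h = (1 / N) *\<^sub>R (- N *\<^sub>R had h a - had t (G *v had h \<beta>) + (2 * \<delta>) *\<^sub>R had t (had h \<beta>))" .
    show ?thesis unfolding qe using Npos
      by (simp add: inner_diff_right inner_add_right inner_minus_right 2 field_simps)
  qed
  have d_eq: "dvec X y \<delta> t = (1 / N) *\<^sub>R Gtc - (\<delta> / N) *\<^sub>R had t c"
    by (simp add: dvec_def Gtc_def G_def N_def c_def matrix_vector_mult_diff_rdistrib
        scaleR_matrix_vector_assoc[symmetric] Tm_mv[symmetric] del: transpose_matrix_vector)
  have b_eq: "bvec X y \<delta> t = a - (\<delta> / N) *\<^sub>R had t \<beta>"
    by (simp add: bvec_def a_def N_def \<beta>_def)
  have z_eq: "zeta X y \<delta> t = 2 *\<^sub>R had \<beta> (a - ((1 / N) *\<^sub>R Gtc - (\<delta> / N) *\<^sub>R had t c))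
      - 2 *\<^sub>R had (a - (\<delta> / N) *\<^sub>R had t \<beta>) c"
    by (simp add: zeta_def d_eq b_eq \<beta>_def a_def c_def)
  have "(1 / real CARD('n)) * (2 * ((y - X *v had t (betat X y \<delta> t)) \<bullet>
      (- (X *v (had h (betat X y \<delta> t) + had t (matrix_inv (Lt X \<delta> t) *v qd X y \<delta> t h))))))
     = 2 * (a \<bullet> had h \<beta>) + 2 * (c \<bullet> qd X y \<delta> t h)"
  proof -
    have "(y - X *v had t \<beta>) \<bullet> (- (X *v (had h \<beta> + had t (Li *v qd X y \<delta> t h))))
        = N * (a \<bullet> (had h \<beta> + had t (Li *v qd X y \<delta> t h)))"
      by (simp only: inner_minus_right s2)
    also have "\<dots> = N * (a \<bullet> had h \<beta>) + N * (c \<bullet> qd X y \<delta> t h)"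
      by (simp add: inner_add_right s3 algebra_simps)
    finally show ?thesis using Npos
      by (simp add: \<beta>_def[symmetric] Li_def[symmetric] N_def[symmetric] field_simps)
  qed
  also have "\<dots> = zeta X y \<delta> t \<bullet> h"
  proof -
    define V where "V = 2 *\<^sub>R had a \<beta> - 2 *\<^sub>R had c a - (2 / N) *\<^sub>R had Gtc \<beta>
        + (4 * \<delta> / N) *\<^sub>R had c (had t \<beta>)"
    have hi: "x \<bullet> had h z = had x z \<bullet> h" for x z :: "real^'p"
      by (simp add: inner_vec_sum had_def mult_ac)
    have hi2: "x \<bullet> had t (had h z) = had x (had t z) \<bullet> h" for x z :: "real^'p"
      by (simp add: inner_vec_sum had_def mult_ac)
    have "2 * (a \<bullet> had h \<beta>) + 2 * (c \<bullet> qd X y \<delta> t h) = V \<bullet> h"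
      unfolding s4 V_def hi hi2
      by (simp add: inner_diff_left inner_add_left algebra_simps)
    also have "V = zeta X y \<delta> t"
      unfolding z_eq V_def using Npos
      by (simp add: had_def vec_eq_iff field_simps)
    finally show ?thesis .
  qed
  finally show ?thesis .
qed



lemma f_deriv:
  fixes X :: "real^'p^'n"
  assumes dpos: "\<delta> > 0" and tb: "\<forall>j. (t$j)\<^sup>2 < 1"
  shows "(flam X y \<delta> lam has_derivative (\<lambda>h. (zeta X y \<delta> t + lam *\<^sub>R (\<chi> j. 1)) \<bullet> h)) (at t)"
proof -
  let ?\<beta> = "betat X y \<delta> t"
  let ?D = "\<lambda>h. matrix_inv (Lt X \<delta> t) *v qd X y \<delta> t h"
  note d\<beta> = beta_deriv[OF dpos tb, where X=X and y=y]
  have dh: "((\<lambda>s. had s (betat X y \<delta> s)) has_derivative (\<lambda>h. had h ?\<beta> + had t (?D h))) (at t)"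
    by (rule has_derivative_eq_rhs[OF bounded_bilinear.FDERIV[OF bb_had has_derivative_ident d\<beta>]])
      (simp add: fun_eq_iff add.commute)
  have du: "((\<lambda>s. X *v had s (betat X y \<delta> s)) has_derivative (\<lambda>h. X *v (had h ?\<beta> + had t (?D h)))) (at t)"
    by (rule bounded_linear.has_derivative[OF bl_mv dh])
  have dn: "((\<lambda>s. (norm (y - X *v had s (betat X y \<delta> s)))\<^sup>2) has_derivative
      (\<lambda>h. 2 *\<^sub>R ((y - X *v had t ?\<beta>) \<bullet> (- (X *v (had h ?\<beta> + had t (?D h))))))) (at t)"
    using has_derivative_compose[OF has_derivative_diff[OF has_derivative_const du] has_derivative_sqnorm_at]
    by simp
  have ds: "((\<lambda>s. \<Sum>j\<in>UNIV. s$j) has_derivative (\<lambda>h. \<Sum>j\<in>UNIV. h$j)) (at t)"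
    by (intro has_derivative_sum bounded_linear.has_derivative[OF bounded_linear_vec_nth has_derivative_ident])
  have e: "flam X y \<delta> lam = (\<lambda>s. (1 / real CARD('n)) * (norm (y - X *v had s (betat X y \<delta> s)))\<^sup>2
      + lam * (\<Sum>j\<in>UNIV. s$j))"
    by (simp add: fun_eq_iff flam_def Xt_mv)
  define \<mu> where "\<mu> = Min (range (\<lambda>j. 1 - (t$j)\<^sup>2))"
  have \<mu>pos: "\<mu> > 0" using tb by (simp add: \<mu>_def)
  have "\<forall>j. \<mu> \<le> 1 - (t$j)\<^sup>2" by (simp add: \<mu>_def)
  then have inv: "invertible (Lt X \<delta> t)" by (rule Lt_invertible[OF dpos \<mu>pos])
  show ?thesis unfolding e
  proof (rule has_derivative_eq_rhs[OF has_derivative_add[OF has_derivative_mult_right[OF dn]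
        has_derivative_mult_right[OF ds]]])
    show "(\<lambda>h. (1 / real CARD('n)) * (2 *\<^sub>R ((y - X *v had t ?\<beta>) \<bullet> (- (X *v (had h ?\<beta> + had t (?D h))))))
        + lam * (\<Sum>j\<in>UNIV. h$j)) = (\<lambda>h. (zeta X y \<delta> t + lam *\<^sub>R (\<chi> j. 1)) \<bullet> h)"
    proof
      fix h
      have "(1 / real CARD('n)) * (2 *\<^sub>R ((y - X *v had t ?\<beta>) \<bullet> (- (X *v (had h ?\<beta> + had t (?D h))))))
          = zeta X y \<delta> t \<bullet> h"
        using alg[OF inv, of y h] by simp
      moreover have "lam * (\<Sum>j\<in>UNIV. h$j) = (lam *\<^sub>R (\<chi> j. 1)) \<bullet> h"
        by (simp add: inner_vec_sum sum_distrib_left)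
      ultimately show "(1 / real CARD('n)) * (2 *\<^sub>R ((y - X *v had t ?\<beta>) \<bullet> (- (X *v (had h ?\<beta> + had t (?D h))))))
        + lam * (\<Sum>j\<in>UNIV. h$j) = (zeta X y \<delta> t + lam *\<^sub>R (\<chi> j. 1)) \<bullet> h"
        by (simp add: inner_add_left)
    qed
  qed
qed

lemma tw_deriv:
  fixes w :: "real^'p"
  shows "(tw has_derivative (\<lambda>h. had (\<chi> j. 2 * w$j * exp (- (w$j * w$j))) h)) (at w)"
proof (subst has_derivative_componentwise_within, intro ballI)
  fix i :: "real^'p" assume "i \<in> Basis"
  then obtain j where i: "i = axis j 1" by (auto simp: Basis_vec_def)
  have "((\<lambda>x. 1 - exp (- (x$j)\<^sup>2)) has_derivative (\<lambda>h. 2 * w$j * exp (- (w$j * w$j)) * h$j)) (at w)"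
    by (auto intro!: derivative_eq_intros bounded_linear.has_derivative[OF bounded_linear_vec_nth has_derivative_ident]
        simp: fun_eq_iff power2_eq_square)
  then show "((\<lambda>x. tw x \<bullet> i) has_derivative (\<lambda>x. had (\<chi> j. 2 * w$j * exp (- (w$j * w$j))) x \<bullet> i)) (at w)"
    by (simp add: i inner_axis tw_def had_def)
qed

lemma sq_lt1: "0 \<le> (x::real) \<Longrightarrow> x < 1 \<Longrightarrow> x\<^sup>2 < 1"
  by (simp add: power2_eq_square) (metis mult_strict_mono' less_eq_real_def mult_1 zero_le_one less_le_trans)

lemma had_inner_right: "x \<bullet> had d h = had x d \<bullet> h"
  by (simp add: inner_vec_sum had_def mult_ac)

theorem theorem4:
  fixes X :: "real^'p^'n" and y :: "real^'n" and \<delta> lam :: real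
  assumes "\<delta> > 0" and "lam > 0"
  shows "(\<forall>t::real^'p. (\<forall>j. 0 < t$j \<and> t$j < 1) \<longrightarrow>
            (flam X y \<delta> lam has_derivative
              (\<lambda>h. (zeta X y \<delta> t + lam *\<^sub>R (\<chi> j. 1)) \<bullet> h)) (at t))
       \<and> (\<forall>w::real^'p.
            (glam X y \<delta> lam has_derivative
              (\<lambda>h. had (zeta X y \<delta> (tw w) + lam *\<^sub>R (\<chi> j. 1))
                       (\<chi> j. 2 * w$j * exp (- (w$j * w$j))) \<bullet> h)) (at w))"
proof (intro conjI allI impI)
  fix t :: "real^'p" assume "\<forall>j. 0 < t$j \<and> t$j < 1"
  then have "\<forall>j. (t$j)\<^sup>2 < 1" by (auto intro: sq_lt1 less_imp_le)
  then show "(flam X y \<delta> lam has_derivative (\<lambda>h. (zeta X y \<delta> t + lam *\<^sub>R (\<chi> j. 1)) \<bullet> h)) (at t)"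
    by (rule f_deriv[OF assms(1)])
next
  fix w :: "real^'p"
  have "\<forall>j. ((tw w)$j)\<^sup>2 < 1"
  proof
    fix j
    have "exp (- (w$j)\<^sup>2) \<le> 1" by simp
    moreover have "exp (- (w$j)\<^sup>2) > 0" by simp
    ultimately show "((tw w)$j)\<^sup>2 < 1" unfolding tw_def by (intro sq_lt1) auto
  qed
  note fd = f_deriv[OF assms(1) this, where X=X and y=y and lam=lam]
  have "((\<lambda>w. flam X y \<delta> lam (tw w)) has_derivative
      (\<lambda>h. (zeta X y \<delta> (tw w) + lam *\<^sub>R (\<chi> j. 1)) \<bullet> had (\<chi> j. 2 * w$j * exp (- (w$j * w$j))) h)) (at w)"
    using has_derivative_compose[OF tw_deriv fd] .
  then show "(glam X y \<delta> lam has_derivative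
      (\<lambda>h. had (zeta X y \<delta> (tw w) + lam *\<^sub>R (\<chi> j. 1)) (\<chi> j. 2 * w$j * exp (- (w$j * w$j))) \<bullet> h)) (at w)"
    by (simp add: glam_def[abs_def] had_inner_right)
qed

end
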